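(* Let $f$ be a stable update function. For every $0<\varepsilon_0\le 1/256$ there exists $\varepsilon>0$ such that, for every configuration $\mathcal U^{(t)}$ of $n$ opinions in $\mathbb S^{d-1}$ and every configuration $\mathcal U^{(t+1)}$ obtained from it by a single interaction: if $\mathcal U^{(t)}$ is $\varepsilon$-inactive, then $\mathcal U^{(t+1)}$ is $\varepsilon_0$-inactive, and the clusters of $\mathcal U^{(t)}$ (with parameter $\varepsilon$) coincide with the clusters of $\mathcal U^{(t+1)}$ (with parameter $\varepsilon_0$).
   Context: Opinions are unit vectors in $\mathbb R^d$; a configuration is an $n$-tuple, $A_{ij}=\langle\vec u_i,\vec u_j\rangle$. An interaction $(i,j)$, $i\ne j$, replaces $\vec u_i$ by $\vec w/\|\vec w\|$ with $\vec w=\vec u_i+f(A_{ij})\vec u_j$, leaving others unchanged. $f:[-1,1]\to\mathbb R$ is stable if continuous and $\operatorname{sign}f(A)=\operatorname{sign}A$ for all $A$. A configuration is $\varepsilon$-inactive if for all $i,j$, $|A_{ij}|\le\varepsilon$ or $|A_{ij}|\ge1-\varepsilon$. For an $\varepsilon$-inactive configuration, a nonempty $C\subseteq[n]$ is a cluster if $|A_{ij}|\ge1-\varepsilon$ for all $i,j\in C$ and $|A_{ij}|\le\varepsilon$ for all $i\in C$, $j\notin C$; for $\varepsilon\le1/256$ the clusters form a unique partition of $[n]$. *)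

theory Defs
  imports "HOL-Analysis.Analysis"
begin

text \<open>Opinions are unit vectors in R^d, modelled as elements of real^'d (d = CARD('d)).
A configuration of n opinions is a map U :: nat => real^'d, of which the entries
U 0, ..., U (n-1) are the opinions.\<close>

definition stable_update :: "(real \<Rightarrow> real) \<Rightarrow> bool" where
  "stable_update f \<longleftrightarrow> continuous_on {-1..1} f \<and> (\<forall>A\<in>{-1..1}. sgn (f A) = sgn A)"

definition configuration :: "nat \<Rightarrow> (nat \<Rightarrow> real^'d) \<Rightarrow> bool" where
  "configuration n U \<longleftrightarrow> (\<forall>i<n. norm (U i) = 1)"

definition interaction_vec :: "(real \<Rightarrow> real) \<Rightarrow> (nat \<Rightarrow> real^'d) \<Rightarrow> nat \<Rightarrow> nat \<Rightarrow> real^'d" where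
  "interaction_vec f U i j = U i + f (inner (U i) (U j)) *\<^sub>R U j"

definition interaction :: "(real \<Rightarrow> real) \<Rightarrow> nat \<Rightarrow> (nat \<Rightarrow> real^'d) \<Rightarrow> nat \<Rightarrow> nat \<Rightarrow> (nat \<Rightarrow> real^'d) \<Rightarrow> bool" where
  "interaction f n U i j U' \<longleftrightarrow> i < n \<and> j < n \<and> i \<noteq> j \<and> interaction_vec f U i j \<noteq> 0 \<and>
     U' = U(i := (1 / norm (interaction_vec f U i j)) *\<^sub>R interaction_vec f U i j)"

definition eps_inactive :: "real \<Rightarrow> nat \<Rightarrow> (nat \<Rightarrow> real^'d) \<Rightarrow> bool" where
  "eps_inactive \<epsilon> n U \<longleftrightarrow> (\<forall>i<n. \<forall>j<n. \<bar>inner (U i) (U j)\<bar> \<le> \<epsilon> \<or> \<bar>inner (U i) (U j)\<bar> \<ge> 1 - \<epsilon>)"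

definition is_cluster :: "real \<Rightarrow> nat \<Rightarrow> (nat \<Rightarrow> real^'d) \<Rightarrow> nat set \<Rightarrow> bool" where
  "is_cluster \<epsilon> n U C \<longleftrightarrow> C \<noteq> {} \<and> C \<subseteq> {..<n} \<and>
     (\<forall>i\<in>C. \<forall>j\<in>C. \<bar>inner (U i) (U j)\<bar> \<ge> 1 - \<epsilon>) \<and>
     (\<forall>i\<in>C. \<forall>j\<in>{..<n} - C. \<bar>inner (U i) (U j)\<bar> \<le> \<epsilon>)"

definition clusters :: "real \<Rightarrow> nat \<Rightarrow> (nat \<Rightarrow> real^'d) \<Rightarrow> nat set set" where
  "clusters \<epsilon> n U = {C. is_cluster \<epsilon> n U C}"

end

theory Submission
  imports Defs
begin

lemma div_le_aux:
  fixes x r t :: real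
  assumes "0 \<le> x" "x \<le> r" "t \<ge> 1"
  shows "x / t \<le> r"
proof -
  have "r * 1 \<le> r * t" using assms by (intro mult_left_mono) auto
  thus ?thesis using assms by (simp add: divide_le_eq)
qed

lemma normalize_close:
  fixes w v :: "'a::real_normed_vector"
  assumes "norm v = 1" "t \<ge> 1" "norm (w - t *\<^sub>R v) \<le> r" "w \<noteq> 0"
  shows "norm ((1/norm w) *\<^sub>R w - v) \<le> 2*r"
proof -
  have tv: "norm (t *\<^sub>R v) = t" using assms by simp
  have d: "\<bar>norm w - t\<bar> \<le> r"
    using norm_triangle_ineq3[of w "t *\<^sub>R v"] tv assms(3) by simp
  have "(1/norm w) *\<^sub>R w - v = ((1/norm w) *\<^sub>R w - (1/t) *\<^sub>R w) + (1/t) *\<^sub>R (w - t *\<^sub>R v)"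
    using assms(2) by (simp add: algebra_simps)
  hence "norm ((1/norm w) *\<^sub>R w - v) \<le> norm ((1/norm w - 1/t) *\<^sub>R w) + norm ((1/t) *\<^sub>R (w - t *\<^sub>R v))"
    by (metis norm_triangle_ineq scaleR_left_diff_distrib)
  also have "norm ((1/norm w - 1/t) *\<^sub>R w) = \<bar>norm w - t\<bar> / t"
    using assms(2,4) by (simp add: field_simps abs_minus_commute)
  also have "norm ((1/t) *\<^sub>R (w - t *\<^sub>R v)) = norm (w - t *\<^sub>R v) / t"
    using assms(2) by simp
  also have "\<bar>norm w - t\<bar> / t + norm (w - t *\<^sub>R v) / t \<le> r + r"
    using div_le_aux[OF _ d assms(2)] div_le_aux[OF norm_ge_zero assms(3,2)] by simp
  finally show ?thesis by simp
qed

lemma inner_perturb: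
  fixes a b a' b' :: "'a::real_inner"
  assumes "norm b' \<le> 1" "norm a \<le> 1"
  shows "\<bar>inner a' b' - inner a b\<bar> \<le> norm (a' - a) + norm (b' - b)"
proof -
  have "inner a' b' - inner a b = inner (a' - a) b' + inner a (b' - b)"
    by (simp add: inner_diff_left inner_diff_right)
  moreover have "\<bar>inner (a' - a) b'\<bar> \<le> norm (a' - a)"
  proof -
    have "norm (a' - a) * norm b' \<le> norm (a' - a) * 1"
      using assms by (intro mult_left_mono) auto
    thus ?thesis using Cauchy_Schwarz_ineq2[of "a' - a" b'] by simp
  qed
  moreover have "\<bar>inner a (b' - b)\<bar> \<le> norm (b' - b)"
  proof -
    have "norm a * norm (b' - b) \<le> 1 * norm (b' - b)"
      using assms by (intro mult_right_mono) auto
    thus ?thesis using Cauchy_Schwarz_ineq2[of a "b' - b"] by simp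
  qed
  ultimately show ?thesis by linarith
qed

theorem mainTheorem18:
  fixes f :: "real \<Rightarrow> real" and \<epsilon>\<^sub>0 :: real
  assumes "stable_update f"
    and "0 < \<epsilon>\<^sub>0" and "\<epsilon>\<^sub>0 \<le> 1/256"
  shows "\<exists>\<epsilon>>0. \<forall>n (U :: nat \<Rightarrow> real^'d) U' i j.
           configuration n U \<longrightarrow> interaction f n U i j U' \<longrightarrow> eps_inactive \<epsilon> n U \<longrightarrow>
           eps_inactive \<epsilon>\<^sub>0 n U' \<and> clusters \<epsilon> n U = clusters \<epsilon>\<^sub>0 n U'"
proof -
  have cont: "continuous_on {-1..1} f" and sg: "\<And>A. A\<in>{-1..1} \<Longrightarrow> sgn (f A) = sgn A"
    using assms(1) by (auto simp: stable_update_def)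
  have f0: "f 0 = 0" using sg[of 0] by (simp add: sgn_eq_0_iff)
  obtain e where e: "e > 0" "\<And>A. A\<in>{-1..1} \<Longrightarrow> dist A 0 < e \<Longrightarrow> dist (f A) (f 0) < \<epsilon>\<^sub>0/8"
  proof -
    have z: "(0::real) \<in> {-1..1}" by simp
    have "\<epsilon>\<^sub>0/8 > 0" using assms(2) by simp
    from cont[unfolded continuous_on_iff, rule_format, OF z this]
    obtain d where "d > 0" "\<forall>x'\<in>{-1..1}. dist x' 0 < d \<longrightarrow> dist (f x') (f 0) < \<epsilon>\<^sub>0/8" by blast
    thus ?thesis using that by blast
  qed
  define \<epsilon> where "\<epsilon> = min (e/2) (\<epsilon>\<^sub>0^2/288)"
  have epos: "\<epsilon> > 0" using e(1) assms(2) by (simp add: \<epsilon>_def)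
  have e_lt: "\<epsilon> < e" using e(1) by (simp add: \<epsilon>_def)
  have e_sq: "\<epsilon> \<le> \<epsilon>\<^sub>0^2/288" by (simp add: \<epsilon>_def)
  have e0sq: "\<epsilon>\<^sub>0^2 \<le> \<epsilon>\<^sub>0" using assms(2,3) by (simp add: power2_eq_square)
  have e_half: "\<epsilon> \<le> \<epsilon>\<^sub>0/2" using e_sq e0sq epos by linarith
  show ?thesis
  proof (rule exI[of _ \<epsilon>], intro conjI allI impI epos)
    fix n and U :: "nat \<Rightarrow> real^'d" and U' i j
    assume conf: "configuration n U" and inter: "interaction f n U i j U'"
      and inact: "eps_inactive \<epsilon> n U"
    define w where "w = interaction_vec f U i j"
    define A where "A = inner (U i) (U j)"
    have ij: "i < n" "j < n" "i \<noteq> j" and w0: "w \<noteq> 0"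
      and U'def: "U' = U(i := (1 / norm w) *\<^sub>R w)"
      using inter by (auto simp: interaction_def w_def)
    have nU: "\<And>k. k < n \<Longrightarrow> norm (U k) = 1" using conf by (simp add: configuration_def)
    have wdef: "w = U i + f A *\<^sub>R U j" by (simp add: w_def A_def interaction_vec_def)
    have Aab: "\<bar>A\<bar> \<le> 1"
      using Cauchy_Schwarz_ineq2[of "U i" "U j"] nU ij by (simp add: A_def)
    have Ain: "A \<in> {-1..1}" using Aab by auto
    have close: "norm ((1 / norm w) *\<^sub>R w - U i) \<le> \<epsilon>\<^sub>0/4"
    proof (cases "\<bar>A\<bar> \<le> \<epsilon>")
      case True
      have "\<bar>f A\<bar> < \<epsilon>\<^sub>0/8" using e(2)[OF Ain] True e_lt f0 by (simp add: dist_real_def)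
      hence "norm (w - 1 *\<^sub>R U i) \<le> \<epsilon>\<^sub>0/8" using nU ij by (simp add: wdef)
      from normalize_close[OF nU[OF ij(1)] _ this w0] show ?thesis by simp
    next
      case False
      hence big: "\<bar>A\<bar> \<ge> 1 - \<epsilon>" using inact ij by (auto simp: eps_inactive_def A_def)
      hence Anz: "A \<noteq> 0" using e_half assms(3) by auto
      define s where "s = sgn A"
      define v where "v = s *\<^sub>R U j"
      define t where "t = 1 + \<bar>f A\<bar>"
      have s2: "s * s = 1" using Anz by (simp add: s_def sgn_if)
      have sA: "s * A = \<bar>A\<bar>" by (simp add: s_def sgn_if)
      have fs: "f A = \<bar>f A\<bar> * s"
        using sg[OF Ain] by (metis s_def sgn_mult_abs mult.commute abs_mult_sgn)
      have nv: "norm v = 1" using nU ij Anz by (simp add: v_def s_def abs_sgn_eq)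
      have wtv: "w - t *\<^sub>R v = U i - v"
      proof -
        have "t *\<^sub>R v = v + (\<bar>f A\<bar> * s) *\<^sub>R U j" by (simp add: t_def v_def algebra_simps)
        thus ?thesis using fs by (simp add: wdef)
      qed
      have ii: "inner (U i) (U i) = 1" using nU[OF ij(1)] by (simp add: power2_norm_eq_inner[symmetric])
      have jj: "inner (U j) (U j) = 1" using nU[OF ij(2)] by (simp add: power2_norm_eq_inner[symmetric])
      have "(norm (U i - v))^2 = 2 - 2 * \<bar>A\<bar>"
        using ii jj s2 sA
        by (simp add: power2_norm_eq_inner inner_diff_left inner_diff_right v_def A_def
            inner_commute[of "U j" "U i"] algebra_simps)
      also have "\<dots> \<le> (\<epsilon>\<^sub>0/12)^2" using big e_sq by (simp add: power2_eq_square)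
      finally have r2: "(norm (U i - v))^2 \<le> (\<epsilon>\<^sub>0/12)^2" .
      have r: "norm (U i - v) \<le> \<epsilon>\<^sub>0/12"
        using power2_le_imp_le[OF r2] assms(2) by simp
      have t1: "t \<ge> 1" by (simp add: t_def)
      have "norm ((1 / norm w) *\<^sub>R w - v) \<le> 2*(\<epsilon>\<^sub>0/12)"
        using normalize_close[OF nv t1 _ w0, of "\<epsilon>\<^sub>0/12"] wtv r by simp
      moreover have "norm ((1 / norm w) *\<^sub>R w - U i) = norm (((1 / norm w) *\<^sub>R w - v) - (U i - v))" by simp
      ultimately show ?thesis using r norm_triangle_ineq4[of "(1 / norm w) *\<^sub>R w - v" "U i - v"]
        by linarith
    qed
    have key1: "\<And>k. k < n \<Longrightarrow> norm (U' k) = 1"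
      using nU w0 by (simp add: U'def)
    have key2: "\<And>k. k < n \<Longrightarrow> norm (U' k - U k) \<le> \<epsilon>\<^sub>0/4"
      using close assms(2) by (simp add: U'def)
    have pert: "\<And>a b. a < n \<Longrightarrow> b < n \<Longrightarrow> \<bar>inner (U' a) (U' b) - inner (U a) (U b)\<bar> \<le> \<epsilon>\<^sub>0/2"
    proof -
      fix a b assume ab: "a < n" "b < n"
      have "\<bar>inner (U' a) (U' b) - inner (U a) (U b)\<bar> \<le> norm (U' a - U a) + norm (U' b - U b)"
        using inner_perturb[of "U' b" "U a" "U' a" "U b"] key1 nU ab by simp
      thus "\<bar>inner (U' a) (U' b) - inner (U a) (U b)\<bar> \<le> \<epsilon>\<^sub>0/2" using key2[OF ab(1)] key2[OF ab(2)] by simp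
    qed
    show "eps_inactive \<epsilon>\<^sub>0 n U'"
      unfolding eps_inactive_def
    proof (intro allI impI)
      fix a b assume ab: "a < n" "b < n"
      have p: "\<bar>inner (U' a) (U' b) - inner (U a) (U b)\<bar> \<le> \<epsilon>\<^sub>0/2" using pert ab .
      have "\<bar>inner (U a) (U b)\<bar> \<le> \<epsilon> \<or> \<bar>inner (U a) (U b)\<bar> \<ge> 1 - \<epsilon>"
        using inact ab by (simp add: eps_inactive_def)
      thus "\<bar>inner (U' a) (U' b)\<bar> \<le> \<epsilon>\<^sub>0 \<or> \<bar>inner (U' a) (U' b)\<bar> \<ge> 1 - \<epsilon>\<^sub>0"
        using p e_half by linarith
    qed
    have fwd_hi: "\<And>a b. a < n \<Longrightarrow> b < n \<Longrightarrow> \<bar>inner (U a) (U b)\<bar> \<ge> 1 - \<epsilon> \<Longrightarrow> \<bar>inner (U' a) (U' b)\<bar> \<ge> 1 - \<epsilon>\<^sub>0"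
    proof -
      fix a b assume ab: "a < n" "b < n" and h: "\<bar>inner (U a) (U b)\<bar> \<ge> 1 - \<epsilon>"
      show "\<bar>inner (U' a) (U' b)\<bar> \<ge> 1 - \<epsilon>\<^sub>0" using pert[OF ab] h e_half by linarith
    qed
    have fwd_lo: "\<And>a b. a < n \<Longrightarrow> b < n \<Longrightarrow> \<bar>inner (U a) (U b)\<bar> \<le> \<epsilon> \<Longrightarrow> \<bar>inner (U' a) (U' b)\<bar> \<le> \<epsilon>\<^sub>0"
    proof -
      fix a b assume ab: "a < n" "b < n" and h: "\<bar>inner (U a) (U b)\<bar> \<le> \<epsilon>"
      show "\<bar>inner (U' a) (U' b)\<bar> \<le> \<epsilon>\<^sub>0" using pert[OF ab] h e_half by linarith
    qed
    have bwd_hi: "\<And>a b. a < n \<Longrightarrow> b < n \<Longrightarrow> \<bar>inner (U' a) (U' b)\<bar> \<ge> 1 - \<epsilon>\<^sub>0 \<Longrightarrow> \<bar>inner (U a) (U b)\<bar> \<ge> 1 - \<epsilon>"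
    proof -
      fix a b assume ab: "a < n" "b < n" and h: "\<bar>inner (U' a) (U' b)\<bar> \<ge> 1 - \<epsilon>\<^sub>0"
      have "\<bar>inner (U a) (U b)\<bar> \<le> \<epsilon> \<or> \<bar>inner (U a) (U b)\<bar> \<ge> 1 - \<epsilon>"
        using inact ab by (simp add: eps_inactive_def)
      thus "\<bar>inner (U a) (U b)\<bar> \<ge> 1 - \<epsilon>" using pert[OF ab] h e_half assms(3) by linarith
    qed
    have bwd_lo: "\<And>a b. a < n \<Longrightarrow> b < n \<Longrightarrow> \<bar>inner (U' a) (U' b)\<bar> \<le> \<epsilon>\<^sub>0 \<Longrightarrow> \<bar>inner (U a) (U b)\<bar> \<le> \<epsilon>"
    proof -
      fix a b assume ab: "a < n" "b < n" and h: "\<bar>inner (U' a) (U' b)\<bar> \<le> \<epsilon>\<^sub>0"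
      have "\<bar>inner (U a) (U b)\<bar> \<le> \<epsilon> \<or> \<bar>inner (U a) (U b)\<bar> \<ge> 1 - \<epsilon>"
        using inact ab by (simp add: eps_inactive_def)
      thus "\<bar>inner (U a) (U b)\<bar> \<le> \<epsilon>" using pert[OF ab] h e_half assms(3) by linarith
    qed
    have "\<And>C. is_cluster \<epsilon> n U C \<longleftrightarrow> is_cluster \<epsilon>\<^sub>0 n U' C"
    proof
      fix C assume "is_cluster \<epsilon> n U C"
      thus "is_cluster \<epsilon>\<^sub>0 n U' C" unfolding is_cluster_def
        using fwd_hi fwd_lo by (meson lessThan_iff subsetD DiffD1)
    next
      fix C assume "is_cluster \<epsilon>\<^sub>0 n U' C"
      thus "is_cluster \<epsilon> n U C" unfolding is_cluster_def
        using bwd_hi bwd_lo by (meson lessThan_iff subsetD DiffD1)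
    qed
    thus "clusters \<epsilon> n U = clusters \<epsilon>\<^sub>0 n U'" by (simp add: clusters_def)
  qed
qed

end
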